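(* Let $A\subseteq\mathbb{R}$ be an open invex set with respect to $\eta:A\times A\to\mathbb{R}$ and let $a,b\in A$ with $a<a+\eta(b,a)$. Let $f:A\to\mathbb{R}$ be differentiable with $f'\in L[a,a+\eta(b,a)]$, and suppose $|f'|$ is preinvex on $A$. Then for every $\alpha>0$, \[ \left|\frac{f(a)+f(a+\eta(b,a))}{2}-\frac{\Gamma(\alpha+1)}{2\eta^{\alpha}(b,a)}\Big[J_{a^+}^{\alpha}f\big(a+\eta(b,a)\big)+J_{(a+\eta(b,a))^-}^{\alpha}f(a)\Big]\right|\le\frac{\eta(b,a)}{2(\alpha+1)}\left(1-\frac{1}{2^{\alpha}}\right)\big[|f'(a)|+|f'(b)|\big]. \]
   Context: A set $A\subseteq\mathbb{R}$ is invex with respect to $\eta:A\times A\to\mathbb{R}$ if $x+t\eta(y,x)\in A$ for all $x,y\in A$ and $t\in[0,1]$. A function $g$ on an invex set $A$ is preinvex with respect to $\eta$ if $g(x+t\eta(y,x))\le(1-t)g(x)+tg(y)$ for all $x,y\in A$, $t\in[0,1]$. For $g\in L[c,d]$ and $\alpha>0$, the Riemann–Liouville fractional integrals are $J_{c^+}^{\alpha}g(x)=\frac{1}{\Gamma(\alpha)}\int_c^x(x-t)^{\alpha-1}g(t)\,dt$ for $x>c$ and $J_{d^-}^{\alpha}g(x)=\frac{1}{\Gamma(\alpha)}\int_x^d(t-x)^{\alpha-1}g(t)\,dt$ for $x<d$; $\eta^{\alpha}(b,a)=(\eta(b,a))^{\alpha}$. *)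

theory Defs
  imports "HOL-Analysis.Analysis"
begin

definition invex_set :: "real set \<Rightarrow> (real \<Rightarrow> real \<Rightarrow> real) \<Rightarrow> bool" where
  "invex_set A \<eta> \<longleftrightarrow> (\<forall>x\<in>A. \<forall>y\<in>A. \<forall>t\<in>{0..1}. x + t * \<eta> y x \<in> A)"

definition preinvex_on :: "real set \<Rightarrow> (real \<Rightarrow> real \<Rightarrow> real) \<Rightarrow> (real \<Rightarrow> real) \<Rightarrow> bool" where
  "preinvex_on A \<eta> g \<longleftrightarrow>
     (\<forall>x\<in>A. \<forall>y\<in>A. \<forall>t\<in>{0..1}. g (x + t * \<eta> y x) \<le> (1 - t) * g x + t * g y)"

definition RL_left :: "real \<Rightarrow> real \<Rightarrow> (real \<Rightarrow> real) \<Rightarrow> real \<Rightarrow> real" where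
  "RL_left \<alpha> c g x = (1 / Gamma \<alpha>) * (LINT t:{c..x}|lborel. (x - t) powr (\<alpha> - 1) * g t)"

definition RL_right :: "real \<Rightarrow> real \<Rightarrow> (real \<Rightarrow> real) \<Rightarrow> real \<Rightarrow> real" where
  "RL_right \<alpha> d g x = (1 / Gamma \<alpha>) * (LINT t:{x..d}|lborel. (t - x) powr (\<alpha> - 1) * g t)"

end

theory Submission
  imports Defs
begin

lemma ftc_real:
  fixes F F' :: "real \<Rightarrow> real"
  assumes "a \<le> c" "\<And>x. x \<in> {a<..<c} \<Longrightarrow> (F has_real_derivative F' x) (at x)"
    "continuous_on {a..c} F"
  shows "(F' has_integral (F c - F a)) {a..c}"
  using fundamental_theorem_of_calculus_interior_strong[of "{}" a c F F'] assms
  by (simp add: has_real_derivative_iff_has_vector_derivative)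

lemma lborel_from_abs:
  fixes f :: "real \<Rightarrow> real"
  assumes "f absolutely_integrable_on S" "(\<lambda>x. indicator S x *\<^sub>R f x) \<in> borel_measurable lborel"
  shows "set_integrable lborel S f"
  using assms unfolding set_integrable_def by (simp add: integrable_completion)

lemma abs_from_lborel:
  fixes f :: "real \<Rightarrow> real"
  assumes "set_integrable lborel S f"
  shows "f absolutely_integrable_on S"
  using assms unfolding set_integrable_def
  by (subst integrable_completion) (auto dest: borel_measurable_integrable)

lemma meas_ind:
  fixes a c :: real and f k :: "real \<Rightarrow> real"
  assumes f: "continuous_on {a..c} f" and k: "k \<in> borel_measurable borel"
  shows "(\<lambda>x. indicator {a..c} x *\<^sub>R (k x * f x)) \<in> borel_measurable lborel"
proof -
  have "(\<lambda>x. indicator {a..c} x *\<^sub>R f x) \<in> borel_measurable borel"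
    by (rule borel_measurable_continuous_on_indicator) (use f in auto)
  then have "(\<lambda>x. k x * (indicator {a..c} x *\<^sub>R f x)) \<in> borel_measurable borel"
    using k by measurable
  then show ?thesis
    by (simp add: indicator_def mult_ac cong: if_cong)
qed

lemma cont_pow_r:
  fixes a c p :: real assumes "p > 0"
  shows "continuous_on {a..c} (\<lambda>x. (c - x) powr p)"
  using assms by (intro continuous_on_powr') (auto intro!: continuous_intros)

lemma cont_pow_l:
  fixes a c p :: real assumes "p > 0"
  shows "continuous_on {a..c} (\<lambda>x. (x - a) powr p)"
  using assms by (intro continuous_on_powr') (auto intro!: continuous_intros)

lemma P_deriv:
  fixes a c x h \<alpha> A0 B0 :: real
  assumes "a < x" "x < c" "h = c - a" "\<alpha> > 0"
  shows "((\<lambda>x. - (A0 - B0) * (c - x) powr (\<alpha> + 2) / (\<alpha> + 2) + (A0 - B0) * (x - a) powr (\<alpha> + 2) / (\<alpha> + 2)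
     - B0 * h * (c - x) powr (\<alpha> + 1) / (\<alpha> + 1) - A0 * h * (x - a) powr (\<alpha> + 1) / (\<alpha> + 1))
    has_real_derivative (((c - x) powr \<alpha> - (x - a) powr \<alpha>) * ((c - x) * A0 + (x - a) * B0))) (at x)"
proof -
  have e1: "(c - x) powr (1 + \<alpha>) = (c - x) powr \<alpha> * (c - x)" using assms by (simp add: powr_add)
  have e2: "(x - a) powr (1 + \<alpha>) = (x - a) powr \<alpha> * (x - a)" using assms by (simp add: powr_add)
  show ?thesis
    using assms apply (auto intro!: derivative_eq_intros)
    apply (simp add: e1 e2 algebra_simps)
    done
qed

lemma alg0: fixes s t D A0 B0 H h :: real assumes "s > 0" "t > 0" "D > 0"
 shows "2 * (- B0 * h * (H * h / (2 * D)) / s - A0 * h * (H * h / (2 * D)) / s)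
        - (- (A0 - B0) * (H * h * h) / t - B0 * h * (H * h) / s)
        - ((A0 - B0) * (H * h * h) / t - A0 * h * (H * h) / s)
   = (A0 + B0) * H * h * h * (1 - 1 / D) / s"
  using assms by (simp add: field_simps)

lemma alg: fixes \<alpha> D A0 B0 H h :: real assumes "\<alpha> > 0" "D > 0"
 shows "2 * (- B0 * h * (H * h / (2 * D)) / (\<alpha> + 1) - A0 * h * (H * h / (2 * D)) / (\<alpha> + 1))
        - (- (A0 - B0) * (H * h * h) / (\<alpha> + 2) - B0 * h * (H * h) / (\<alpha> + 1))
        - ((A0 - B0) * (H * h * h) / (\<alpha> + 2) - A0 * h * (H * h) / (\<alpha> + 1))
   = (A0 + B0) * H * h * h * (1 - 1 / D) / (\<alpha> + 1)"
  by (rule alg0) (use assms in auto)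

lemma alg3: fixes Z h X s :: real assumes "h \<noteq> 0" shows "Z * h * h * X / s / h = Z * h * X / s"
  using assms by (simp add: divide_simps)

lemma alg2: fixes Z H h X s :: real assumes "H > 0" "s > 0" shows "(Z * H * h * X / s) / (2 * H) = h / (2 * s) * X * Z"
  using assms by (simp add: field_simps)

theorem theorem2p3:
  fixes A :: "real set" and \<eta> :: "real \<Rightarrow> real \<Rightarrow> real"
    and f f' :: "real \<Rightarrow> real" and a b \<alpha> :: real
  assumes "open A" and "invex_set A \<eta>"
    and "a \<in> A" and "b \<in> A" and "a < a + \<eta> b a"
    and "\<And>x. x \<in> A \<Longrightarrow> (f has_real_derivative f' x) (at x)"
    and "set_integrable lborel {a..a + \<eta> b a} f'"
    and "preinvex_on A \<eta> (\<lambda>x. \<bar>f' x\<bar>)"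
    and "\<alpha> > 0"
  shows "\<bar>(f a + f (a + \<eta> b a)) / 2
           - Gamma (\<alpha> + 1) / (2 * (\<eta> b a) powr \<alpha>)
             * (RL_left \<alpha> a f (a + \<eta> b a) + RL_right \<alpha> (a + \<eta> b a) f a)\<bar>
         \<le> \<eta> b a / (2 * (\<alpha> + 1)) * (1 - 1 / 2 powr \<alpha>) * (\<bar>f' a\<bar> + \<bar>f' b\<bar>)"
proof -
  define h where "h = \<eta> b a"
  define c where "c = a + h"
  define A0 where "A0 = \<bar>f' a\<bar>"
  define B0 where "B0 = \<bar>f' b\<bar>"
  have hpos: "h > 0" using assms(5) unfolding h_def by simp
  have hne: "h \<noteq> 0" using hpos by simp
  have ac: "a < c" using hpos unfolding c_def by simp
  have al: "\<alpha> > 0" by fact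
  have sub: "{a..c} \<subseteq> A"
  proof
    fix x assume x: "x \<in> {a..c}"
    define t where "t = (x - a) / h"
    have t: "t \<in> {0..1}" using x hpos unfolding t_def c_def by auto
    have "a + t * \<eta> b a = x" using hpos unfolding t_def h_def by simp
    then show "x \<in> A" using assms(2,3,4) t unfolding invex_set_def by metis
  qed
  have bnd: "\<bar>f' x\<bar> * h \<le> (c - x) * A0 + (x - a) * B0" if x: "x \<in> {a..c}" for x
  proof -
    define t where "t = (x - a) / h"
    have t: "t \<in> {0..1}" using x hpos unfolding t_def c_def by auto
    have xe: "a + t * \<eta> b a = x" using hpos unfolding t_def h_def by simp
    have "\<bar>f' x\<bar> \<le> (1 - t) * A0 + t * B0"
      using assms(8,3,4) t xe unfolding preinvex_on_def A0_def B0_def by metis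
    then have "\<bar>f' x\<bar> * h \<le> ((1 - t) * A0 + t * B0) * h"
      using hpos by (simp add: mult_right_mono)
    also have "\<dots> = (c - x) * A0 + (x - a) * B0"
      using hpos unfolding t_def c_def by (simp add: field_simps)
    finally show ?thesis .
  qed
  have der: "(f has_real_derivative f' x) (at x)" if "x \<in> {a..c}" for x
    using assms(6) sub that by blast
  have cont_f: "continuous_on {a..c} f"
    by (rule continuous_at_imp_continuous_on) (use der DERIV_isCont in blast)
  have f'ai: "f' absolutely_integrable_on {a..c}"
    using abs_from_lborel[OF assms(7)] unfolding c_def h_def .
  have bf: "bounded (f ` {a..c})"
    by (rule compact_imp_bounded, rule compact_continuous_image[OF cont_f]) simp
  have cpow: "continuous_on {a..c} (\<lambda>x. (c - x) powr \<alpha>)"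
    using al by (intro continuous_on_powr') (auto intro!: continuous_intros)
  have apow: "continuous_on {a..c} (\<lambda>x. (x - a) powr \<alpha>)"
    using al by (intro continuous_on_powr') (auto intro!: continuous_intros)
  have kc: "(\<lambda>x. (c - x) powr (\<alpha> - 1)) integrable_on {a..c}"
  proof -
    define F where "F = (\<lambda>x. - ((c - x) powr \<alpha>) / \<alpha>)"
    have "((\<lambda>x. (c - x) powr (\<alpha> - 1)) has_integral (F c - F a)) {a..c}"
    proof (rule ftc_real)
      fix x assume x: "x \<in> {a<..<c}"
      show "(F has_real_derivative (c - x) powr (\<alpha> - 1)) (at x)"
        unfolding F_def using x al by (auto intro!: derivative_eq_intros)
    qed (use ac cpow al in \<open>auto intro!: continuous_intros simp: F_def\<close>)
    then show ?thesis by blast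
  qed
  have ka: "(\<lambda>x. (x - a) powr (\<alpha> - 1)) integrable_on {a..c}"
  proof -
    define F where "F = (\<lambda>x. (x - a) powr \<alpha> / \<alpha>)"
    have "((\<lambda>x. (x - a) powr (\<alpha> - 1)) has_integral (F c - F a)) {a..c}"
    proof (rule ftc_real)
      fix x assume x: "x \<in> {a<..<c}"
      show "(F has_real_derivative (x - a) powr (\<alpha> - 1)) (at x)"
        unfolding F_def using x al by (auto intro!: derivative_eq_intros)
    qed (use ac apow al in \<open>auto intro!: continuous_intros simp: F_def\<close>)
    then show ?thesis by blast
  qed
  have q1: "(\<lambda>x. (c - x) powr (\<alpha> - 1) * f x) absolutely_integrable_on {a..c}"
    using absolutely_integrable_bounded_measurable_product_real[OF
        continuous_imp_measurable_on_sets_lebesgue[OF cont_f] _ bf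
        nonnegative_absolutely_integrable_1[OF kc]]
    by (simp add: mult.commute)
  have q2: "(\<lambda>x. (x - a) powr (\<alpha> - 1) * f x) absolutely_integrable_on {a..c}"
    using absolutely_integrable_bounded_measurable_product_real[OF
        continuous_imp_measurable_on_sets_lebesgue[OF cont_f] _ bf
        nonnegative_absolutely_integrable_1[OF ka]]
    by (simp add: mult.commute)
  have p1: "(\<lambda>x. (c - x) powr \<alpha> * f' x) absolutely_integrable_on {a..c}"
    by (rule absolutely_integrable_bounded_measurable_product_real[OF
        continuous_imp_measurable_on_sets_lebesgue[OF cpow] _ _ f'ai])
      (auto intro!: compact_imp_bounded compact_continuous_image cpow)
  have p2: "(\<lambda>x. (x - a) powr \<alpha> * f' x) absolutely_integrable_on {a..c}"
    by (rule absolutely_integrable_bounded_measurable_product_real[OF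
        continuous_imp_measurable_on_sets_lebesgue[OF apow] _ _ f'ai])
      (auto intro!: compact_imp_bounded compact_continuous_image apow)
  have p1i: "(\<lambda>x. (c - x) powr \<alpha> * f' x) integrable_on {a..c}"
    using p1 absolutely_integrable_on_def by blast
  have p2i: "(\<lambda>x. (x - a) powr \<alpha> * f' x) integrable_on {a..c}"
    using p2 absolutely_integrable_on_def by blast
  have q1i: "(\<lambda>x. (c - x) powr (\<alpha> - 1) * f x) integrable_on {a..c}"
    using q1 absolutely_integrable_on_def by blast
  have q2i: "(\<lambda>x. (x - a) powr (\<alpha> - 1) * f x) integrable_on {a..c}"
    using q2 absolutely_integrable_on_def by blast
  define I1 where "I1 = integral {a..c} (\<lambda>x. (c - x) powr (\<alpha> - 1) * f x)"
  define I2 where "I2 = integral {a..c} (\<lambda>x. (x - a) powr (\<alpha> - 1) * f x)"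
  define J1 where "J1 = integral {a..c} (\<lambda>x. (c - x) powr \<alpha> * f' x)"
  define J2 where "J2 = integral {a..c} (\<lambda>x. (x - a) powr \<alpha> * f' x)"
  define H where "H = h powr \<alpha>"
  have Hpos: "H > 0" using hpos unfolding H_def by simp
  have h1: "J1 - \<alpha> * I1 = - (H * f a)"
  proof -
    define G where "G = (\<lambda>x. (c - x) powr \<alpha> * f x)"
    have "((\<lambda>x. (c - x) powr \<alpha> * f' x - \<alpha> * ((c - x) powr (\<alpha> - 1) * f x)) has_integral (G c - G a)) {a..c}"
    proof (rule ftc_real)
      fix x assume x: "x \<in> {a<..<c}"
      then have d: "(f has_real_derivative f' x) (at x)" using der by auto
      show "(G has_real_derivative (c - x) powr \<alpha> * f' x - \<alpha> * ((c - x) powr (\<alpha> - 1) * f x)) (at x)"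
        unfolding G_def using x al by (auto intro!: derivative_eq_intros d simp: algebra_simps)
    qed (use ac cpow cont_f in \<open>auto intro!: continuous_intros simp: G_def\<close>)
    moreover have "G c - G a = - (H * f a)" unfolding G_def H_def c_def by simp
    moreover have "((\<lambda>x. (c - x) powr \<alpha> * f' x - \<alpha> * ((c - x) powr (\<alpha> - 1) * f x)) has_integral (J1 - \<alpha> * I1)) {a..c}"
      unfolding J1_def I1_def
      by (intro has_integral_diff has_integral_mult_right integrable_integral p1i q1i)
    ultimately show ?thesis using has_integral_unique by metis
  qed
  have h2: "J2 + \<alpha> * I2 = H * f c"
  proof -
    define G where "G = (\<lambda>x. (x - a) powr \<alpha> * f x)"
    have "((\<lambda>x. (x - a) powr \<alpha> * f' x + \<alpha> * ((x - a) powr (\<alpha> - 1) * f x)) has_integral (G c - G a)) {a..c}"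
    proof (rule ftc_real)
      fix x assume x: "x \<in> {a<..<c}"
      then have d: "(f has_real_derivative f' x) (at x)" using der by auto
      show "(G has_real_derivative (x - a) powr \<alpha> * f' x + \<alpha> * ((x - a) powr (\<alpha> - 1) * f x)) (at x)"
        unfolding G_def using x al by (auto intro!: derivative_eq_intros d simp: algebra_simps)
    qed (use ac apow cont_f in \<open>auto intro!: continuous_intros simp: G_def\<close>)
    moreover have "G c - G a = H * f c" unfolding G_def H_def c_def by simp
    moreover have "((\<lambda>x. (x - a) powr \<alpha> * f' x + \<alpha> * ((x - a) powr (\<alpha> - 1) * f x)) has_integral (J2 + \<alpha> * I2)) {a..c}"
      unfolding J2_def I2_def
      by (intro has_integral_add has_integral_mult_right integrable_integral p2i q2i)
    ultimately show ?thesis using has_integral_unique by metis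
  qed
  have RL1: "RL_left \<alpha> a f c = I1 / Gamma \<alpha>"
  proof -
    have si: "set_integrable lborel {a..c} (\<lambda>x. (c - x) powr (\<alpha> - 1) * f x)"
      by (rule lborel_from_abs[OF q1 meas_ind[OF cont_f]]) measurable
    show ?thesis unfolding RL_left_def I1_def
      using set_borel_integral_eq_integral(2)[OF si] by simp
  qed
  have RL2: "RL_right \<alpha> c f a = I2 / Gamma \<alpha>"
  proof -
    have si: "set_integrable lborel {a..c} (\<lambda>x. (x - a) powr (\<alpha> - 1) * f x)"
      by (rule lborel_from_abs[OF q2 meas_ind[OF cont_f]]) measurable
    show ?thesis unfolding RL_right_def I2_def
      using set_borel_integral_eq_integral(2)[OF si] by simp
  qed
  have Gam: "Gamma (\<alpha> + 1) = \<alpha> * Gamma \<alpha>"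
    using al by (intro Gamma_plus1) (auto simp: nonpos_Ints_def)
  have Gpos: "Gamma \<alpha> > 0" using al by simp
  have E: "(f a + f c) / 2 - Gamma (\<alpha> + 1) / (2 * H) * (RL_left \<alpha> a f c + RL_right \<alpha> c f a)
      = - (J1 - J2) / (2 * H)"
  proof -
    have "Gamma (\<alpha> + 1) / (2 * H) * (RL_left \<alpha> a f c + RL_right \<alpha> c f a)
        = (\<alpha> * I1 + \<alpha> * I2) / (2 * H)"
      unfolding RL1 RL2 Gam using Gpos Hpos by (simp add: field_simps)
    also have "\<dots> = (J1 - J2 + H * (f a + f c)) / (2 * H)"
      using h1 h2 by (simp add: algebra_simps)
    finally have X: "Gamma (\<alpha> + 1) / (2 * H) * (RL_left \<alpha> a f c + RL_right \<alpha> c f a)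
        = (J1 - J2 + H * (f a + f c)) / (2 * H)" .
    show ?thesis unfolding X using Hpos by (simp add: field_simps)
  qed
  define K where "K = (\<lambda>x. (c - x) powr \<alpha> - (x - a) powr \<alpha>)"
  define W where "W = (\<lambda>x. (c - x) * A0 + (x - a) * B0)"
  define P where "P = (\<lambda>x. - (A0 - B0) * (c - x) powr (\<alpha> + 2) / (\<alpha> + 2) + (A0 - B0) * (x - a) powr (\<alpha> + 2) / (\<alpha> + 2)
     - B0 * h * (c - x) powr (\<alpha> + 1) / (\<alpha> + 1) - A0 * h * (x - a) powr (\<alpha> + 1) / (\<alpha> + 1))"
  have Pder: "(P has_real_derivative (K x * W x)) (at x)" if "x \<in> {a<..<c}" for x
  proof -
    from that have "a < x" "x < c" by auto
    then have "(P has_real_derivative (((c - x) powr \<alpha> - (x - a) powr \<alpha>) * ((c - x) * A0 + (x - a) * B0))) (at x)"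
      unfolding P_def by (intro P_deriv) (use al in \<open>simp_all add: c_def\<close>)
    then show ?thesis by (simp add: K_def W_def)
  qed
  have Pcont: "continuous_on {a..c} P"
    unfolding P_def using al
    by (intro continuous_on_add continuous_on_diff continuous_on_mult continuous_on_divide
        continuous_on_minus continuous_on_const cont_pow_r cont_pow_l) (use al in auto)
  define m where "m = (a + c) / 2"
  have am: "a \<le> m" "m \<le> c" using ac unfolding m_def by auto
  have int1: "((\<lambda>x. K x * W x) has_integral (P m - P a)) {a..m}"
    by (rule ftc_real) (use am Pder in auto, rule continuous_on_subset[OF Pcont], use am in auto)
  have int2': "((\<lambda>x. K x * W x) has_integral (P c - P m)) {m..c}"
    by (rule ftc_real) (use am Pder in auto, rule continuous_on_subset[OF Pcont], use am in auto)
  have int2: "((\<lambda>x. - (K x * W x)) has_integral (- (P c - P m))) {m..c}"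
    using has_integral_neg[OF int2'] .
  define g where "g = (\<lambda>x. \<bar>K x\<bar> * W x)"
  have A0pos: "A0 \<ge> 0" and B0pos: "B0 \<ge> 0" unfolding A0_def B0_def by auto
  have Wpos: "W x \<ge> 0" if "x \<in> {a..c}" for x
    using that A0pos B0pos unfolding W_def by auto
  have Kpos: "K x \<ge> 0" if "x \<in> {a..m}" for x
    using that al unfolding K_def m_def by (auto intro!: powr_mono2)
  have Kneg: "K x \<le> 0" if "x \<in> {m..c}" for x
    using that al unfolding K_def m_def by (auto intro!: powr_mono2)
  have g1: "(g has_integral (P m - P a)) {a..m}"
    by (rule has_integral_eq[OF _ int1]) (use Kpos in \<open>simp add: g_def\<close>)
  have g2: "(g has_integral (- (P c - P m))) {m..c}"
    by (rule has_integral_eq[OF _ int2]) (use Kneg in \<open>simp add: g_def\<close>)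
  have gint: "(g has_integral (P m - P a + - (P c - P m))) {a..c}"
    by (rule has_integral_combine[OF am g1 g2])
  have Tval: "P m - P a + - (P c - P m) = (A0 + B0) * H * h * h * (1 - 1 / 2 powr \<alpha>) / (\<alpha> + 1)"
  proof -
    have hp2: "h powr (\<alpha> + 2) = H * h * h" unfolding H_def using hpos
      by (simp add: powr_add power2_eq_square)
    have hp1: "h powr (\<alpha> + 1) = H * h" unfolding H_def using hpos by (simp add: powr_add)
    have hm1: "(h / 2) powr (\<alpha> + 1) = H * h / (2 * 2 powr \<alpha>)" unfolding H_def using hpos
      by (simp add: powr_add powr_divide)
    have d: "c - m = h / 2" "m - a = h / 2" "c - a = h" unfolding m_def c_def by (auto simp: field_simps)
    have z: "(0::real) powr (\<alpha> + 2) = 0" "(0::real) powr (\<alpha> + 1) = 0" by auto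
    have "P m - P a + - (P c - P m) = 2 * (- B0 * h * (h/2) powr (\<alpha> + 1) / (\<alpha> + 1) - A0 * h * (h/2) powr (\<alpha> + 1) / (\<alpha> + 1))
        - (- (A0 - B0) * h powr (\<alpha> + 2) / (\<alpha> + 2) - B0 * h * h powr (\<alpha> + 1) / (\<alpha> + 1))
        - ((A0 - B0) * h powr (\<alpha> + 2) / (\<alpha> + 2) - A0 * h * h powr (\<alpha> + 1) / (\<alpha> + 1))"
      unfolding P_def d using al by (simp add: z field_simps)
    also have "\<dots> = (A0 + B0) * H * h * h * (1 - 1 / 2 powr \<alpha>) / (\<alpha> + 1)"
      unfolding hp2 hp1 hm1 by (rule alg) (use al in auto)
    finally show ?thesis .
  qed
  have Kf'i: "(\<lambda>x. K x * f' x) integrable_on {a..c}"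
    using integrable_diff[OF p1i p2i] unfolding K_def by (simp add: left_diff_distrib)
  have JK: "J1 - J2 = integral {a..c} (\<lambda>x. K x * f' x)"
    unfolding J1_def J2_def K_def using integral_diff[OF p1i p2i] by (simp add: left_diff_distrib)
  have gh: "((\<lambda>x. g x / h) has_integral ((A0 + B0) * H * h * (1 - 1 / 2 powr \<alpha>) / (\<alpha> + 1))) {a..c}"
    using has_integral_divide[OF gint, of h] unfolding Tval alg3[OF hne] .
  have "norm (integral {a..c} (\<lambda>x. K x * f' x)) \<le> integral {a..c} (\<lambda>x. g x / h)"
  proof (rule integral_norm_bound_integral[OF Kf'i])
    show "(\<lambda>x. g x / h) integrable_on {a..c}" using gh by blast
    fix x assume x: "x \<in> {a..c}"
    have "\<bar>f' x\<bar> \<le> W x / h" using bnd[OF x] hpos unfolding W_def by (simp add: pos_le_divide_eq)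
    then have "\<bar>K x\<bar> * \<bar>f' x\<bar> \<le> \<bar>K x\<bar> * (W x / h)" by (rule mult_left_mono) auto
    then show "norm (K x * f' x) \<le> g x / h" unfolding g_def by (simp add: abs_mult)
  qed
  then have JB: "\<bar>J1 - J2\<bar> \<le> (A0 + B0) * H * h * (1 - 1 / 2 powr \<alpha>) / (\<alpha> + 1)"
    using JK integral_unique[OF gh] by simp
  have "\<bar>(f a + f c) / 2 - Gamma (\<alpha> + 1) / (2 * H) * (RL_left \<alpha> a f c + RL_right \<alpha> c f a)\<bar>
      = \<bar>J1 - J2\<bar> / (2 * H)" unfolding E using Hpos by (simp add: abs_minus_commute)
  also have "\<dots> \<le> ((A0 + B0) * H * h * (1 - 1 / 2 powr \<alpha>) / (\<alpha> + 1)) / (2 * H)"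
    using JB Hpos by (intro divide_right_mono) auto
  also have "\<dots> = h / (2 * (\<alpha> + 1)) * (1 - 1 / 2 powr \<alpha>) * (A0 + B0)"
    by (rule alg2) (use Hpos al in auto)
  finally show ?thesis unfolding H_def c_def h_def A0_def B0_def .
qed

end
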